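(* Under the standing assumptions below, let $w_0(h)=\sqrt{\varepsilon_0(h)}\,z_0(h)$ and $G_h(w)=1+\frac{w}{\sqrt{\varepsilon_0(h)}}-w^2$. Then $G_h(w_0(h))>0$, $\varepsilon_0$ is differentiable on $[0,\infty)$, and $$\varepsilon_0'(h)=\frac{2\varepsilon_0(h)\,G_h(w_0(h))}{1+h\,G_h(w_0(h))}>0\qquad (h\ge0).$$
   Context: Let $K:\mathbb R\to[0,\infty)$ be measurable with $K(s)=K(-s)$ for all $s\in\mathbb R$, $\int_{\mathbb R}K(s)\,ds=1$, and $\int_{\mathbb R}K(s)e^{\lambda s}ds<\infty$ for every $\lambda\in\mathbb R$. Fix $p>1$. For $h\ge0$, $z\in\mathbb R$, $\varepsilon>0$ set $$\psi_h(z,\varepsilon)=\varepsilon z^2-z-1+p\,e^{-zh}\int_{\mathbb R}K(s)e^{-\sqrt{\varepsilon}\,zs}\,ds .$$ Standing fact (known, assumed): for every $h\ge0$ there is exactly one pair $(z_0(h),\varepsilon_0(h))$ with $z_0(h)>0$, $\varepsilon_0(h)>0$ satisfying $\psi_h(z_0,\varepsilon_0)=0$ and $\partial_z\psi_h(z_0,\varepsilon_0)=0$; moreover $\varepsilon_0(h)$ is the largest $\varepsilon>0$ for which $\psi_h(\cdot,\varepsilon)$ has a positive zero, and $\psi_h(z,\varepsilon)>0$ for all $z>0$ whenever $\varepsilon>\varepsilon_0(h)$. Define $c_*(h)=1/\sqrt{\varepsilon_0(h)}$. *)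

theory Defs
  imports "HOL-Analysis.Analysis"
begin

definition psi :: "(real \<Rightarrow> real) \<Rightarrow> real \<Rightarrow> real \<Rightarrow> real \<Rightarrow> real \<Rightarrow> real" where
  "psi K p h z \<epsilon> = \<epsilon> * z\<^sup>2 - z - 1
     + p * exp (- z * h) * (LINT s|lborel. K s * exp (- sqrt \<epsilon> * z * s))"

definition tangent_pair :: "(real \<Rightarrow> real) \<Rightarrow> real \<Rightarrow> real \<Rightarrow> real \<Rightarrow> real \<Rightarrow> bool" where
  "tangent_pair K p h z \<epsilon> \<longleftrightarrow> z > 0 \<and> \<epsilon> > 0 \<and> psi K p h z \<epsilon> = 0 \<and>
     ((\<lambda>y. psi K p h y \<epsilon>) has_real_derivative 0) (at z)"

definition z0 :: "(real \<Rightarrow> real) \<Rightarrow> real \<Rightarrow> real \<Rightarrow> real" where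
  "z0 K p h = fst (THE q. tangent_pair K p h (fst q) (snd q))"

definition eps0 :: "(real \<Rightarrow> real) \<Rightarrow> real \<Rightarrow> real \<Rightarrow> real" where
  "eps0 K p h = snd (THE q. tangent_pair K p h (fst q) (snd q))"

definition G :: "(real \<Rightarrow> real) \<Rightarrow> real \<Rightarrow> real \<Rightarrow> real \<Rightarrow> real" where
  "G K p h w = 1 + w / sqrt (eps0 K p h) - w\<^sup>2"

definition w0 :: "(real \<Rightarrow> real) \<Rightarrow> real \<Rightarrow> real \<Rightarrow> real" where
  "w0 K p h = sqrt (eps0 K p h) * z0 K p h"

end

theory Submission
  imports Defs
begin

lemma exp_quad: fixes y :: real assumes "\<bar>y\<bar> \<le> 1" shows "exp y \<le> 1 + y + y^2"
proof (cases "y \<ge> 0")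
  case True then show ?thesis using exp_bound[of y] assms by simp
next
  case False
  define u where "u = -y"
  have u: "u > 0" using False u_def by simp
  have l: "1 + u + u^2/2 \<le> exp u" using exp_lower_Taylor_quadratic[of u] u by simp
  have e: "(1 - u + u^2) * (2 + 2*u + u^2) = 2 + u^2 + u^3 + u^4" by (simp add: algebra_simps power2_eq_square power3_eq_cube power4_eq_xxxx)
  have "1 - u + u^2 \<ge> 0"
  proof (cases "u \<le> 1")
    case True then show ?thesis by (simp add: add_nonneg_nonneg)
  next
    case False
    hence "u*1 \<le> u*u" using u by (intro mult_left_mono) auto
    thus ?thesis by (simp add: power2_eq_square)
  qed
  moreover have "2 + 2*u + u^2 \<le> 2 * exp u" using l by simp
  ultimately have "(1 - u + u^2) * (2 + 2*u + u^2) \<le> (1 - u + u^2) * (2 * exp u)" by (metis mult_left_mono)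
  moreover have "u^2 + u^3 + u^4 \<ge> 0" using u by simp
  ultimately have "(1 - u + u^2) * exp u \<ge> 1" using e by linarith
  hence "exp (-u) \<le> 1 - u + u^2" by (simp add: exp_minus field_simps)
  thus ?thesis using u_def by simp
qed

lemma exp_sub1_le: fixes u :: real assumes "u \<ge> 0" shows "exp u - 1 \<le> u * exp u"
proof -
  have "1 - u \<le> exp (-u)" by (rule exp_minus_ge)
  hence "(1 - u) * exp u \<le> exp (-u) * exp u" by (simp add: mult_right_mono)
  thus ?thesis by (simp add: exp_minus_inverse algebra_simps)
qed

definition Qf :: "real \<Rightarrow> (real \<Rightarrow> real) \<Rightarrow> real \<Rightarrow> real \<Rightarrow> real \<Rightarrow> real" where
  "Qf p J w x t = w^2 - x*w - 1 + p * (exp (-(x*t)*w) * J w)"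

locale envl =
  fixes p :: real and J :: "real \<Rightarrow> real" and cs W :: "real \<Rightarrow> real"
  assumes p_pos: "p > 0"
    and J_pos: "\<And>w. J w > 0"
    and E_conv: "\<And>k a b l. 0 \<le> l \<Longrightarrow> l \<le> 1 \<Longrightarrow>
       exp (-k*(l*a+(1-l)*b)) * J (l*a+(1-l)*b) \<le> l*(exp (-k*a) * J a) + (1-l)*(exp (-k*b) * J b)"
    and cs_pos: "\<And>t. t \<ge> 0 \<Longrightarrow> cs t > 0"
    and W_pos: "\<And>t. t \<ge> 0 \<Longrightarrow> W t > 0"
    and QW: "\<And>t. t \<ge> 0 \<Longrightarrow> Qf p J (W t) (cs t) t = 0"
    and Ppos: "\<And>t w x. t \<ge> 0 \<Longrightarrow> w > 0 \<Longrightarrow> 0 < x \<Longrightarrow> x < cs t \<Longrightarrow> Qf p J w x t > 0"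
begin

abbreviation "Q \<equiv> Qf p J"

lemma Qmono_x: assumes "t \<ge> 0" "w > 0" "x \<le> x'" shows "Q w x' t \<le> Q w x t"
proof -
  have "x*t*w \<le> x'*t*w" using assms by (simp add: mult_right_mono)
  hence "exp (-(x'*t)*w) \<le> exp (-(x*t)*w)" by simp
  hence "p * (exp (-(x'*t)*w) * J w) \<le> p * (exp (-(x*t)*w) * J w)"
    using p_pos J_pos[of w] by (simp add: mult_right_mono)
  moreover have "x*w \<le> x'*w" using assms by (simp add: mult_right_mono)
  ultimately show ?thesis unfolding Qf_def by linarith
qed

lemma Qmono_t: assumes "x \<ge> 0" "w > 0" "t \<le> t'" shows "Q w x t' \<le> Q w x t"
proof -
  have "x*t*w \<le> x*t'*w" using assms by (simp add: mult_right_mono mult_left_mono)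
  hence "exp (-(x*t')*w) \<le> exp (-(x*t)*w)" by simp
  hence "p * (exp (-(x*t')*w) * J w) \<le> p * (exp (-(x*t)*w) * J w)"
    using p_pos J_pos[of w] by (simp add: mult_right_mono)
  then show ?thesis unfolding Qf_def by linarith
qed

lemma P: assumes "t \<ge> 0" "w > 0" "Q w x t \<le> 0" shows "cs t \<le> x"
proof (rule ccontr)
  assume "\<not> cs t \<le> x"
  define x' where "x' = max x (cs t / 2)"
  have "0 < x'" "x' < cs t" "x \<le> x'" using cs_pos[OF assms(1)] \<open>\<not> cs t \<le> x\<close> unfolding x'_def by auto
  have "Q w x' t \<le> Q w x t" by (rule Qmono_x) (use assms \<open>x \<le> x'\<close> in auto)
  moreover have "Q w x' t > 0" by (rule Ppos) (use assms \<open>0 < x'\<close> \<open>x' < cs t\<close> in auto)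
  ultimately show False using assms by linarith
qed

lemma Qconv: assumes "0 \<le> l" "l \<le> 1"
  shows "Q (l*a+(1-l)*b) x t + l*(1-l)*(a-b)^2 \<le> l * Q a x t + (1-l) * Q b x t"
proof -
  define m where "m = l*a+(1-l)*b"
  define Xm where "Xm = exp (-(x*t)*m) * J m"
  define Xa where "Xa = exp (-(x*t)*a) * J a"
  define Xb where "Xb = exp (-(x*t)*b) * J b"
  have e0: "Xm \<le> l*Xa + (1-l)*Xb" unfolding Xm_def Xa_def Xb_def m_def using E_conv[OF assms, of "x*t" a b] by simp
  have e: "p*Xm \<le> l*(p*Xa) + (1-l)*(p*Xb)"
  proof -
    have "p*Xm \<le> p*(l*Xa + (1-l)*Xb)" using e0 p_pos by (simp add: mult_left_mono)
    also have "p*(l*Xa + (1-l)*Xb) = l*(p*Xa) + (1-l)*(p*Xb)" by (simp add: distrib_left mult.left_commute)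
    finally show ?thesis .
  qed
  have sq: "m^2 + l*(1-l)*(a-b)^2 = l*a^2 + (1-l)*b^2" unfolding m_def by (simp add: algebra_simps power2_eq_square)
  have lin: "l*(a^2 - x*a - 1 + p*Xa) + (1-l)*(b^2 - x*b - 1 + p*Xb) = (l*a^2 + (1-l)*b^2) - x*m - 1 + (l*(p*Xa) + (1-l)*(p*Xb))"
    unfolding m_def by (simp add: algebra_simps)
  have "Q (l*a+(1-l)*b) x t = m^2 - x*m - 1 + p*Xm" unfolding Qf_def m_def Xm_def by simp
  moreover have "Q a x t = a^2 - x*a - 1 + p*Xa" unfolding Qf_def Xa_def by simp
  moreover have "Q b x t = b^2 - x*b - 1 + p*Xb" unfolding Qf_def Xb_def by simp
  ultimately show ?thesis using sq e lin by simp
qed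

lemma Qnonneg: assumes "t \<ge> 0" "w > 0" shows "Q w (cs t) t \<ge> 0"
proof (rule ccontr)
  assume "\<not> ?thesis"
  hence neg: "Q w (cs t) t < 0" by simp
  have "isCont (\<lambda>x. Q w x t) (cs t)" unfolding Qf_def by (intro continuous_intros)
  hence "((\<lambda>x. Q w x t) \<longlongrightarrow> Q w (cs t) t) (at (cs t))" by (simp add: isCont_def)
  hence "eventually (\<lambda>x. Q w x t < 0) (at (cs t))" using neg by (rule order_tendstoD)
  then obtain d where d: "d > 0" "\<And>x. x \<noteq> cs t \<Longrightarrow> dist x (cs t) < d \<Longrightarrow> Q w x t < 0"
    unfolding eventually_at by auto
  have "Q w (cs t - d/2) t < 0" by (rule d(2)) (use d(1) in \<open>auto simp: dist_real_def\<close>)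
  hence "cs t \<le> cs t - d/2" using P[OF assms] by (simp add: less_imp_le)
  thus False using d(1) by simp
qed

lemma Qpos_uniq: assumes "t \<ge> 0" "w > 0" "w \<noteq> W t" shows "Q w (cs t) t > 0"
proof (rule ccontr)
  assume "\<not> ?thesis"
  hence z: "Q w (cs t) t = 0" using Qnonneg[OF assms(1,2)] by simp
  have c: "Q ((1/2)*w+(1-1/2)*W t) (cs t) t + (1/2)*(1-1/2)*(w - W t)^2 \<le> (1/2) * Q w (cs t) t + (1-1/2) * Q (W t) (cs t) t"
    by (rule Qconv) auto
  have pos: "(w - W t)^2 > 0" using assms(3) by simp
  have c2: "(w - W t)^2 + 4 * Q ((w + W t)/2) (cs t) t \<le> 0" using c z QW[OF assms(1)] by (simp add: field_simps)
  have "Q ((w + W t)/2) (cs t) t < 0" using c2 pos by linarith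
  moreover have "Q ((w + W t)/2) (cs t) t \<ge> 0" by (rule Qnonneg) (use assms W_pos[OF assms(1)] in auto)
  ultimately show False by simp
qed

lemma cs_anti: assumes "0 \<le> t" "t \<le> t'" shows "cs t' \<le> cs t"
proof -
  have "Q (W t) (cs t) t' \<le> Q (W t) (cs t) t"
    using Qmono_t[of "cs t" "W t" t t'] cs_pos[OF assms(1)] W_pos[OF assms(1)] assms(2) by linarith
  hence "Q (W t) (cs t) t' \<le> 0" using QW[OF assms(1)] by simp
  thus ?thesis using P[of t' "W t" "cs t"] assms W_pos by auto
qed

definition A :: "real \<Rightarrow> real" where "A t = 1 + cs t * W t - (W t)^2"

lemma A_eq: assumes "t \<ge> 0" shows "A t = p * (exp (-(cs t*t)*W t) * J (W t))"
  using QW[OF assms] unfolding Qf_def A_def by linarith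

lemma A_pos: assumes "t \<ge> 0" shows "A t > 0"
  using A_eq[OF assms] p_pos J_pos by simp

lemma W_bound: assumes "t \<ge> 0" shows "W t < cs t + 1"
proof (rule ccontr)
  assume "\<not> ?thesis"
  hence "W t - cs t \<ge> 1" by simp
  hence "W t * (W t - cs t) \<ge> W t * 1" using W_pos[OF assms] by (intro mult_left_mono) auto
  hence "A t \<le> 1 - W t + cs t * 0" unfolding A_def by (simp add: algebra_simps power2_eq_square)
  hence "A t \<le> 0" using \<open>W t - cs t \<ge> 1\<close> cs_pos[OF assms] by simp
  thus False using A_pos[OF assms] by simp
qed

lemma A_le: assumes "t \<ge> 0" shows "A t \<le> 1 + cs t * W t"
  unfolding A_def by simp

end

context envl begin

lemma Q_repr:
  assumes h: "h \<ge> 0" and x: "x = cs h + \<delta>"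
  shows "Q (W h) x t = -\<delta>*W h + A h*(exp ((cs h*h)*W h - (x*t)*W h) - 1)"
proof -
  define c where "c = cs h"
  define w where "w = W h"
  define a where "a = A h"
  define y where "y = (cs h*h)*W h - (x*t)*W h"
  have e1: "exp (-(x*t)*w) = exp (-(c*h)*w) * exp y"
  proof -
    have "exp (-(c*h)*w) * exp y = exp (-(c*h)*w + y)" by (rule exp_add[symmetric])
    also have "-(c*h)*w + y = -(x*t)*w" unfolding y_def c_def w_def by simp
    finally show ?thesis by simp
  qed
  have "p * (exp (-(x*t)*w) * J w) = (p * (exp (-(c*h)*w) * J w)) * exp y"
    unfolding e1 by (simp add: ac_simps)
  also have "p * (exp (-(c*h)*w) * J w) = a" unfolding a_def c_def w_def using A_eq[OF h] by simp
  finally have P1: "p * (exp (-(x*t)*w) * J w) = a * exp y" .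
  have xw: "x*w = c*w + \<delta>*w" unfolding x c_def by (simp add: algebra_simps)
  have ad: "a = 1 + c*w - w^2" unfolding a_def A_def c_def w_def by simp
  have "Q w x t = w^2 - x*w - 1 + a * exp y" unfolding Qf_def using P1 by simp
  also have "\<dots> = -\<delta>*w + a*(exp y - 1)" using xw ad by (simp add: algebra_simps)
  finally show ?thesis unfolding w_def a_def y_def by simp
qed

lemma exp_step:
  fixes a w \<delta> y :: real
  assumes "a > 0" "\<bar>y\<bar> \<le> 1" "a*y^2 \<le> \<delta>*w - a*y"
  shows "-\<delta>*w + a*(exp y - 1) \<le> 0"
proof -
  have "exp y - 1 \<le> y + y^2" using exp_quad[OF assms(2)] by simp
  hence "a*(exp y - 1) \<le> a*(y + y^2)" using assms(1) by (simp add: mult_left_mono)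
  thus ?thesis using assms(3) by (simp add: algebra_simps)
qed

lemma upper:
  assumes h: "h \<ge> 0" and eta: "\<eta> > 0"
  shows "eventually (\<lambda>h'. cs h' \<le> cs h + (-cs h*A h/(1+h*A h))*(h'-h) + \<eta>*\<bar>h'-h\<bar>) (at h within {0..})"
proof -
  define c where "c = cs h"
  define w where "w = W h"
  define a where "a = A h"
  define D where "D = -c*a/(1+h*a)"
  have c: "c > 0" and w: "w > 0" and a: "a > 0" unfolding c_def w_def a_def using cs_pos W_pos A_pos h by auto
  have ha: "1 + h*a > 0" using h a by (simp add: add_pos_nonneg)
  have Dfact: "D*(1+a*h) = -a*c" unfolding D_def using ha by (simp add: field_simps)
  define M where "M = w*(c + (\<bar>D\<bar>+\<eta>)*(h+1))"
  have M: "M \<ge> 0" unfolding M_def using w c h eta by simp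
  define r where "r = min 1 (min (1/(M+1)) (w*\<eta>/(a*M^2 + w*\<bar>D\<bar>*a + 1)))"
  have den: "a*M^2 + w*\<bar>D\<bar>*a + 1 > 0" using a w by (simp add: add_nonneg_pos)
  have r: "r > 0" unfolding r_def using M w eta den by simp
  have key: "cs h' \<le> c + D*(h'-h) + \<eta>*\<bar>h'-h\<bar>" if h': "h' \<ge> 0" "\<bar>h'-h\<bar> < r" for h'
  proof -
    define \<Delta> where "\<Delta> = h'-h"
    define \<delta> where "\<delta> = D*\<Delta> + \<eta>*\<bar>\<Delta>\<bar>"
    define x where "x = c+\<delta>"
    define y where "y = (c*h)*w - (x*h')*w"
    have Qx: "Q w x h' = -\<delta>*w + a*(exp y - 1)"
      unfolding w_def a_def y_def using Q_repr[OF h, of x \<delta> h'] x_def c_def w_def by simp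
    have Dl: "\<bar>\<Delta>\<bar> < r" using h' \<Delta>_def by simp
    have D1: "\<bar>\<Delta>\<bar> \<le> 1" using Dl r_def by simp
    have yid: "y = w*(-c*\<Delta> - \<delta>*h')" unfolding y_def x_def \<Delta>_def by (simp add: algebra_simps)
    have dabs: "\<bar>\<delta>\<bar> \<le> (\<bar>D\<bar>+\<eta>)*\<bar>\<Delta>\<bar>"
    proof -
      have "\<bar>\<delta>\<bar> \<le> \<bar>D*\<Delta>\<bar> + \<bar>\<eta>*\<bar>\<Delta>\<bar>\<bar>" unfolding \<delta>_def by (rule abs_triangle_ineq)
      also have "\<dots> = (\<bar>D\<bar>+\<eta>)*\<bar>\<Delta>\<bar>" using eta by (simp add: abs_mult algebra_simps)
      finally show ?thesis .
    qed
    have h'b: "h' \<le> h+1" using D1 \<Delta>_def by simp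
    have "\<bar>-c*\<Delta> - \<delta>*h'\<bar> \<le> c*\<bar>\<Delta>\<bar> + \<bar>\<delta>\<bar>*h'"
    proof -
      have "\<bar>-c*\<Delta> - \<delta>*h'\<bar> \<le> \<bar>-c*\<Delta>\<bar> + \<bar>\<delta>*h'\<bar>" by (rule abs_triangle_ineq4)
      also have "\<dots> = c*\<bar>\<Delta>\<bar> + \<bar>\<delta>\<bar>*h'" using c h' by (simp add: abs_mult)
      finally show ?thesis .
    qed
    also have "\<dots> \<le> c*\<bar>\<Delta>\<bar> + ((\<bar>D\<bar>+\<eta>)*\<bar>\<Delta>\<bar>)*(h+1)"
    proof -
      have "\<bar>\<delta>\<bar>*h' \<le> ((\<bar>D\<bar>+\<eta>)*\<bar>\<Delta>\<bar>)*(h+1)"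
        by (rule mult_mono) (use dabs h'b h' eta in auto)
      thus ?thesis by simp
    qed
    also have "\<dots> = (c + (\<bar>D\<bar>+\<eta>)*(h+1))*\<bar>\<Delta>\<bar>" by (simp add: algebra_simps)
    finally have "\<bar>-c*\<Delta> - \<delta>*h'\<bar> \<le> (c + (\<bar>D\<bar>+\<eta>)*(h+1))*\<bar>\<Delta>\<bar>" .
    hence "w*\<bar>-c*\<Delta> - \<delta>*h'\<bar> \<le> w*((c + (\<bar>D\<bar>+\<eta>)*(h+1))*\<bar>\<Delta>\<bar>)" using w by (simp add: mult_left_mono)
    hence yb: "\<bar>y\<bar> \<le> M*\<bar>\<Delta>\<bar>" unfolding yid M_def using w by (simp add: abs_mult mult.assoc)
    have y1: "\<bar>y\<bar> \<le> 1"
    proof -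
      have "M*\<bar>\<Delta>\<bar> \<le> M*(1/(M+1))" using Dl r_def M by (intro mult_left_mono) auto
      also have "\<dots> \<le> 1" using M by (simp add: field_simps)
      finally show ?thesis using yb by simp
    qed
    have id1: "\<delta>*w - a*y = w*(\<delta>*(1+a*h') + a*c*\<Delta>)" unfolding yid by (simp add: algebra_simps)
    have id2: "D*\<Delta>*(1+a*h') = D*\<Delta>*(1+a*h) + D*a*\<Delta>^2" unfolding \<Delta>_def by (simp add: algebra_simps power2_eq_square)
    have id2b: "D*\<Delta>*(1+a*h) = -a*c*\<Delta>"
    proof -
      have "D*\<Delta>*(1+a*h) = (D*(1+a*h))*\<Delta>" by (simp add: ac_simps)
      also have "\<dots> = -a*c*\<Delta>" using Dfact by (simp add: ac_simps)
      finally show ?thesis .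
    qed
    have id3: "\<delta>*(1+a*h') + a*c*\<Delta> = D*a*\<Delta>^2 + \<eta>*\<bar>\<Delta>\<bar>*(1+a*h')"
    proof -
      have "\<delta>*(1+a*h') = D*\<Delta>*(1+a*h') + \<eta>*\<bar>\<Delta>\<bar>*(1+a*h')" unfolding \<delta>_def by (simp add: algebra_simps)
      thus ?thesis using id2 id2b by linarith
    qed
    have y2: "a*y^2 \<le> a*M^2*\<Delta>^2"
    proof -
      have "y^2 \<le> (M*\<bar>\<Delta>\<bar>)^2" using yb by (metis abs_ge_zero power2_abs power_mono)
      hence "a*y^2 \<le> a*(M*\<bar>\<Delta>\<bar>)^2" using a by (simp add: mult_left_mono)
      thus ?thesis by (simp add: power_mult_distrib)
    qed
    have t1: "w*(D*a*\<Delta>^2) \<ge> -(w*\<bar>D\<bar>*a*\<Delta>^2)"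
    proof -
      have "D \<ge> -\<bar>D\<bar>" by simp
      hence "D*(w*a*\<Delta>^2) \<ge> -\<bar>D\<bar>*(w*a*\<Delta>^2)" using w a by (intro mult_right_mono) auto
      thus ?thesis by (simp add: algebra_simps)
    qed
    have t2: "w*(\<eta>*\<bar>\<Delta>\<bar>*(1+a*h')) \<ge> w*\<eta>*\<bar>\<Delta>\<bar>"
    proof -
      have "1+a*h' \<ge> 1" using a h' by simp
      hence "(w*\<eta>*\<bar>\<Delta>\<bar>)*(1+a*h') \<ge> (w*\<eta>*\<bar>\<Delta>\<bar>)*1" using w eta by (intro mult_left_mono) auto
      thus ?thesis by (simp add: algebra_simps)
    qed
    have t3: "(a*M^2 + w*\<bar>D\<bar>*a)*\<Delta>^2 \<le> w*\<eta>*\<bar>\<Delta>\<bar>"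
    proof -
      have "(a*M^2 + w*\<bar>D\<bar>*a)*\<bar>\<Delta>\<bar> \<le> (a*M^2 + w*\<bar>D\<bar>*a + 1)*r"
        using Dl a w by (intro mult_mono) auto
      also have "\<dots> \<le> (a*M^2 + w*\<bar>D\<bar>*a + 1)*(w*\<eta>/(a*M^2 + w*\<bar>D\<bar>*a + 1))"
        using den r_def by (intro mult_left_mono) auto
      also have "\<dots> = w*\<eta>" using den by simp
      finally have "(a*M^2 + w*\<bar>D\<bar>*a)*\<bar>\<Delta>\<bar>*\<bar>\<Delta>\<bar> \<le> w*\<eta>*\<bar>\<Delta>\<bar>" by (simp add: mult_right_mono)
      thus ?thesis by (simp add: power2_eq_square mult.assoc)
    qed
    have "a*y^2 \<le> \<delta>*w - a*y"
    proof -
      have "\<delta>*w - a*y = w*(D*a*\<Delta>^2 + \<eta>*\<bar>\<Delta>\<bar>*(1+a*h'))" using id1 id3 by simp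
      hence "\<delta>*w - a*y = w*(D*a*\<Delta>^2) + w*(\<eta>*\<bar>\<Delta>\<bar>*(1+a*h'))" by (simp only: distrib_left)
      moreover have "a*M^2*\<Delta>^2 + w*\<bar>D\<bar>*a*\<Delta>^2 \<le> w*\<eta>*\<bar>\<Delta>\<bar>" using t3 by (simp add: algebra_simps)
      ultimately show ?thesis using y2 t1 t2 by linarith
    qed
    hence "Q w x h' \<le> 0" unfolding Qx by (intro exp_step a y1)
    hence "cs h' \<le> x" by (rule P[OF h'(1) w])
    thus ?thesis unfolding x_def \<delta>_def \<Delta>_def by simp
  qed
  show ?thesis unfolding eventually_at
    by (rule exI[of _ r]) (use r key in \<open>auto simp: dist_real_def c_def a_def D_def\<close>)
qed

end

lemma ev_within:
  fixes a :: real
  assumes "r > 0" "\<And>x. x \<in> S \<Longrightarrow> x \<noteq> a \<Longrightarrow> \<bar>x - a\<bar> < r \<Longrightarrow> P x"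
  shows "eventually P (at a within S)"
  unfolding eventually_at dist_real_def using assms by blast

context envl begin

lemma crude:
  assumes h: "h \<ge> 0" and hh: "h < h'" "h' \<le> h+1"
  shows "cs h - (cs h*(1 + cs h*(cs h+1))*exp ((cs h+1)*cs h))*(h'-h) \<le> cs h'"
proof -
  define c where "c = cs h"
  define \<kappa> where "\<kappa> = c*(1 + c*(c+1))*exp ((c+1)*c)"
  define c' where "c' = cs h'"
  define w' where "w' = W h'"
  define a' where "a' = A h'"
  define \<Delta> where "\<Delta> = h'-h"
  define x where "x = c' + \<kappa>*\<Delta>"
  define y where "y = (c'*h')*w' - (x*h)*w'"
  have h'0: "h' \<ge> 0" using h hh by simp
  have c: "c > 0" unfolding c_def using cs_pos h by simp
  have c': "c' > 0" unfolding c'_def using cs_pos h'0 by simp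
  have cc: "c' \<le> c" unfolding c_def c'_def using cs_anti h hh by simp
  have w': "w' > 0" unfolding w'_def using W_pos h'0 by simp
  have wb: "w' \<le> c+1" using W_bound[OF h'0] cc unfolding w'_def c'_def by simp
  have a': "a' > 0" unfolding a'_def using A_pos h'0 by simp
  have ab: "a' \<le> 1 + c'*w'" unfolding a'_def c'_def w'_def using A_le h'0 by simp
  have \<kappa>: "\<kappa> \<ge> 0" unfolding \<kappa>_def using c by simp
  have \<Delta>: "\<Delta> > 0" "\<Delta> \<le> 1" unfolding \<Delta>_def using hh by auto
  have Qx: "Q w' x h = -(\<kappa>*\<Delta>)*w' + a'*(exp y - 1)"
    unfolding w'_def a'_def y_def using Q_repr[OF h'0, of x "\<kappa>*\<Delta>" h] x_def c'_def w'_def by simp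
  define u where "u = w'*c'*\<Delta>"
  have u: "u \<ge> 0" unfolding u_def using w' c' \<Delta> by simp
  have yu: "y \<le> u"
  proof -
    have "y = w'*(c'*\<Delta>) - w'*(\<kappa>*\<Delta>*h)" unfolding y_def x_def \<Delta>_def by (simp add: algebra_simps)
    moreover have "w'*(\<kappa>*\<Delta>*h) \<ge> 0" using w' \<kappa> \<Delta> h by simp
    ultimately show ?thesis unfolding u_def by (simp add: mult.assoc)
  qed
  have "exp y - 1 \<le> exp u - 1" using yu by simp
  also have "\<dots> \<le> u * exp u" by (rule exp_sub1_le[OF u])
  finally have e1: "exp y - 1 \<le> u * exp u" .
  have ub: "u \<le> (c+1)*c"
  proof -
    have "w'*c' \<le> (c+1)*c" using wb cc w' c' by (intro mult_mono) auto
    hence "w'*c'*\<Delta> \<le> ((c+1)*c)*1" using \<Delta> w' c' c by (intro mult_mono[of "w'*c'"]) auto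
    thus ?thesis unfolding u_def by simp
  qed
  have ab2: "a' \<le> 1 + c*(c+1)"
  proof -
    have "c'*w' \<le> c*(c+1)" using wb cc w' c' by (intro mult_mono) auto
    thus ?thesis using ab by simp
  qed
  have "u * exp u \<le> (w'*c*\<Delta>) * exp ((c+1)*c)"
  proof (rule mult_mono)
    show "u \<le> w'*c*\<Delta>" unfolding u_def using cc w' \<Delta> by (simp add: mult_left_mono mult_right_mono)
    show "exp u \<le> exp ((c+1)*c)" using ub by simp
  qed (use w' c \<Delta> in auto)
  hence "a'*(exp y - 1) \<le> a'*((w'*c*\<Delta>) * exp ((c+1)*c))" using e1 a'
    by (meson mult_left_mono order_trans less_imp_le)
  also have "\<dots> \<le> (1 + c*(c+1))*((w'*c*\<Delta>) * exp ((c+1)*c))"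
    using ab2 w' c \<Delta> by (intro mult_right_mono) auto
  also have "\<dots> = (\<kappa>*\<Delta>)*w'" unfolding \<kappa>_def by (simp add: ac_simps)
  finally have "Q w' x h \<le> 0" unfolding Qx by simp
  hence "c \<le> x" unfolding c_def by (rule P[OF h w'])
  thus ?thesis unfolding x_def \<kappa>_def \<Delta>_def c'_def c_def by simp
qed

lemma cs_cont: assumes h: "h \<ge> 0" shows "(cs \<longlongrightarrow> cs h) (at h within {0..})"
proof (rule tendstoI)
  fix e :: real assume e: "e > 0"
  define c where "c = cs h"
  define D where "D = -cs h*A h/(1+h*A h)"
  define \<kappa> where "\<kappa> = cs h*(1 + cs h*(cs h+1))*exp ((cs h+1)*cs h)"
  have c: "c > 0" unfolding c_def using cs_pos h by simp
  have \<kappa>: "\<kappa> \<ge> 0" unfolding \<kappa>_def using cs_pos[OF h] by simp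
  define r where "r = min 1 (e/(\<bar>D\<bar>+1+\<kappa>+1))"
  have r: "r > 0" unfolding r_def using e \<kappa> by (simp add: add_nonneg_pos)
  have ev1: "eventually (\<lambda>h'. cs h' \<le> c + D*(h'-h) + 1*\<bar>h'-h\<bar>) (at h within {0..})"
    using upper[OF h, of 1] unfolding c_def D_def by simp
  have ev2: "eventually (\<lambda>h'. h' \<ge> 0 \<and> \<bar>h'-h\<bar> < r) (at h within {0..})"
    by (rule ev_within[OF r]) auto
  show "eventually (\<lambda>h'. dist (cs h') (cs h) < e) (at h within {0..})"
  proof (rule eventually_mono[OF eventually_conj[OF ev1 ev2]])
    fix h' assume H: "cs h' \<le> c + D*(h'-h) + 1*\<bar>h'-h\<bar> \<and> h' \<ge> 0 \<and> \<bar>h'-h\<bar> < r"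
    have rb: "(\<bar>D\<bar>+1+\<kappa>+1) * r \<le> e"
    proof -
      have "(\<bar>D\<bar>+1+\<kappa>+1) * r \<le> (\<bar>D\<bar>+1+\<kappa>+1) * (e/(\<bar>D\<bar>+1+\<kappa>+1))"
        unfolding r_def using \<kappa> by (intro mult_left_mono) auto
      also have "\<dots> = e" using \<kappa> by simp
      finally show ?thesis .
    qed
    have hr: "\<bar>h'-h\<bar> < r" using H by simp
    show "dist (cs h') (cs h) < e"
    proof (cases "h' \<le> h")
      case True
      have lo: "c \<le> cs h'" unfolding c_def using cs_anti H True by simp
      have "D*(h'-h) \<le> \<bar>D\<bar>*\<bar>h'-h\<bar>" by (metis abs_ge_self abs_mult)
      hence "cs h' - c \<le> (\<bar>D\<bar>+1)*\<bar>h'-h\<bar>" using H by (simp add: algebra_simps)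
      also have "\<dots> < (\<bar>D\<bar>+1+\<kappa>+1)*r" using hr \<kappa>
        by (smt (verit, best) abs_ge_zero mult_less_cancel_right mult_right_mono mult_strict_left_mono)
      finally show ?thesis using lo rb unfolding dist_real_def c_def by simp
    next
      case False
      have hi: "cs h' \<le> c" unfolding c_def using cs_anti h False by simp
      have "\<bar>h'-h\<bar> < 1" using hr r_def by simp
      hence hle: "h' \<le> h+1" by (simp add: abs_less_iff)
      have "c - \<kappa>*(h'-h) \<le> cs h'" using crude[OF h _ hle] False unfolding c_def \<kappa>_def by simp
      hence "c - cs h' \<le> \<kappa>*\<bar>h'-h\<bar>" using False by simp
      also have "\<dots> \<le> \<kappa>*r" using hr \<kappa> by (intro mult_left_mono) auto
      also have "\<dots> < (\<bar>D\<bar>+1+\<kappa>+1)*r" using r by (intro mult_strict_right_mono) auto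
      finally show ?thesis using hi rb unfolding dist_real_def c_def by simp
    qed
  qed
qed

end

context envl begin

lemma W_cont: assumes h: "h \<ge> 0" shows "(W \<longlongrightarrow> W h) (at h within {0..})"
proof (rule tendstoI)
  fix e :: real assume e: "e > 0"
  define c where "c = cs h"
  define w where "w = W h"
  have w: "w > 0" unfolding w_def using W_pos h by simp
  define d where "d = min e (w/2)"
  have d: "d > 0" "d \<le> e" "d < w" unfolding d_def using e w by auto
  define a1 where "a1 = w + d"
  define b1 where "b1 = w - d"
  have b1: "b1 > 0" unfolding b1_def using d by simp
  have qa: "Q a1 c h > 0" unfolding c_def by (rule Qpos_uniq[OF h]) (use w d in \<open>auto simp: a1_def w_def\<close>)
  have qb: "Q b1 c h > 0" unfolding c_def by (rule Qpos_uniq[OF h]) (use b1 d in \<open>auto simp: b1_def w_def\<close>)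
  have q0: "Q w c h = 0" unfolding c_def w_def by (rule QW[OF h])
  have lim: "((\<lambda>t. Q z (cs t) t - Q w (cs t) t) \<longlongrightarrow> Q z c h - Q w c h) (at h within {0..})" for z
    unfolding Qf_def c_def using cs_cont[OF h] by (intro tendsto_intros) auto
  have eva: "eventually (\<lambda>t. Q a1 (cs t) t - Q w (cs t) t > 0) (at h within {0..})"
    using order_tendstoD(1)[OF lim[of a1], of 0] qa q0 by simp
  have evb: "eventually (\<lambda>t. Q b1 (cs t) t - Q w (cs t) t > 0) (at h within {0..})"
    using order_tendstoD(1)[OF lim[of b1], of 0] qb q0 by simp
  have ev0: "eventually (\<lambda>t. t \<ge> 0) (at h within {0..})" by (rule ev_within[of 1]) auto
  show "eventually (\<lambda>t. dist (W t) (W h) < e) (at h within {0..})"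
  proof (rule eventually_mono[OF eventually_conj[OF ev0 eventually_conj[OF eva evb]]])
    fix t assume H: "t \<ge> 0 \<and> Q a1 (cs t) t - Q w (cs t) t > 0 \<and> Q b1 (cs t) t - Q w (cs t) t > 0"
    hence t: "t \<ge> 0" by simp
    define w' where "w' = W t"
    define c' where "c' = cs t"
    have w': "w' > 0" unfolding w'_def using W_pos t by simp
    have qw': "Q w' c' t = 0" unfolding w'_def c'_def by (rule QW[OF t])
    have qw: "Q w c' t \<ge> 0" unfolding c'_def by (rule Qnonneg[OF t w])
    have conv: "Q (l*w+(1-l)*w') c' t \<le> Q w c' t" if l: "0 \<le> l" "l \<le> 1" for l
    proof -
      have "Q (l*w+(1-l)*w') c' t + l*(1-l)*(w-w')^2 \<le> l * Q w c' t + (1-l) * Q w' c' t" by (rule Qconv[OF l])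
      moreover have "l*(1-l)*(w-w')^2 \<ge> 0" using l by simp
      moreover have "l * Q w c' t \<le> 1 * Q w c' t" using l qw by (intro mult_right_mono) auto
      ultimately show ?thesis using qw' by simp
    qed
    have up: "w' < a1"
    proof (rule ccontr)
      assume "\<not> w' < a1"
      hence ge: "w' \<ge> a1" by simp
      define l where "l = (w' - a1)/(w' - w)"
      have ww: "w' - w > 0" using ge d unfolding a1_def by simp
      have l: "0 \<le> l" "l \<le> 1" unfolding l_def using ge ww d by (auto simp: a1_def field_simps)
      have "l*(w'-w) = w' - a1" unfolding l_def using ww by simp
      hence "l*w+(1-l)*w' = a1" by (simp add: algebra_simps)
      hence "Q a1 c' t \<le> Q w c' t" using conv[OF l] by simp
      thus False using H unfolding c'_def by simp
    qed
    have lo: "w' > b1"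
    proof (rule ccontr)
      assume "\<not> w' > b1"
      hence le: "w' \<le> b1" by simp
      define l where "l = (b1 - w')/(w - w')"
      have ww: "w - w' > 0" using le d unfolding b1_def by simp
      have l: "0 \<le> l" "l \<le> 1" unfolding l_def using le ww d by (auto simp: b1_def field_simps)
      have "l*(w-w') = b1 - w'" unfolding l_def using ww by simp
      hence "l*w+(1-l)*w' = b1" by (simp add: algebra_simps)
      hence "Q b1 c' t \<le> Q w c' t" using conv[OF l] by simp
      thus False using H unfolding c'_def by simp
    qed
    show "dist (W t) (W h) < e" using up lo d unfolding dist_real_def w'_def a1_def b1_def w_def
      by (simp add: abs_less_iff)
  qed
qed

end

lemma frac_le1: fixes X :: real assumes "X \<ge> 0" shows "X*(1/(X+1)) \<le> 1"
  using assms by (simp add: field_simps)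

context envl begin

lemma lower:
  assumes h: "h \<ge> 0" and eta: "\<eta> > 0"
  shows "eventually (\<lambda>h'. cs h + (-cs h*A h/(1+h*A h))*(h'-h) - \<eta>*\<bar>h'-h\<bar> \<le> cs h') (at h within {0..})"
proof -
  define c where "c = cs h"
  define w where "w = W h"
  define a where "a = A h"
  define D where "D = -c*a/(1+h*a)"
  have c: "c > 0" and w: "w > 0" and a: "a > 0" unfolding c_def w_def a_def using cs_pos W_pos A_pos h by auto
  have ha: "1 + h*a > 0" using h a by (simp add: add_pos_nonneg)
  have Dfact: "D*(1+a*h) = -a*c" unfolding D_def using ha by (simp add: field_simps)
  define \<rho> where "\<rho> = (\<lambda>t. D*(1 + A t*h) + A t*cs t)"
  have rho_lim: "(\<rho> \<longlongrightarrow> D*(1 + a*h) + a*c) (at h within {0..})"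
    unfolding \<rho>_def A_def a_def c_def using cs_cont[OF h] W_cont[OF h] by (intro tendsto_intros)
  hence rho_lim0: "(\<rho> \<longlongrightarrow> 0) (at h within {0..})" using Dfact by simp
  have ev1: "eventually (\<lambda>t. \<bar>\<rho> t\<bar> < \<eta>/2) (at h within {0..})"
    using tendstoD[OF rho_lim0, of "\<eta>/2"] eta by (simp add: dist_real_def)
  have ev2: "eventually (\<lambda>t. dist (cs t) c < 1) (at h within {0..})"
    using tendstoD[OF cs_cont[OF h], of 1] unfolding c_def by simp
  define N where "N = (c+1) + (\<bar>D\<bar>+\<eta>)*h"
  define Ab where "Ab = 1 + (c+1)*(c+2)"
  have N: "N \<ge> 0" unfolding N_def using c h eta by simp
  have Ab: "Ab > 0" unfolding Ab_def using c by (simp add: add_pos_nonneg)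
  define K where "K = Ab*(c+2)*N^2"
  have K: "K \<ge> 0" unfolding K_def using Ab c by simp
  define r where "r = min 1 (min (1/((c+2)*N+1)) (\<eta>/(2*(K+1))))"
  have r: "r > 0" unfolding r_def using c N eta K by (simp add: add_nonneg_pos)
  have ev3: "eventually (\<lambda>t. t \<ge> 0 \<and> \<bar>t-h\<bar> < r) (at h within {0..})"
    by (rule ev_within[OF r]) auto
  show ?thesis
  proof (rule eventually_mono[OF eventually_conj[OF ev1 eventually_conj[OF ev2 ev3]]])
    fix h' assume H: "\<bar>\<rho> h'\<bar> < \<eta>/2 \<and> dist (cs h') c < 1 \<and> h' \<ge> 0 \<and> \<bar>h'-h\<bar> < r"
    hence h': "h' \<ge> 0" and Dl: "\<bar>h'-h\<bar> < r" and rh: "\<bar>\<rho> h'\<bar> < \<eta>/2" by auto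
    define c' where "c' = cs h'"
    define w' where "w' = W h'"
    define a' where "a' = A h'"
    have c': "c' > 0" unfolding c'_def using cs_pos h' by simp
    have c'b: "c' \<le> c+1" using H unfolding c'_def dist_real_def by (simp add: abs_less_iff)
    have w': "w' > 0" unfolding w'_def using W_pos h' by simp
    have w'b: "w' \<le> c+2" using W_bound[OF h'] c'b unfolding w'_def c'_def by simp
    have a': "a' > 0" unfolding a'_def using A_pos h' by simp
    have a'b: "a' \<le> Ab"
    proof -
      have "c'*w' \<le> (c+1)*(c+2)" using c'b w'b c' w' by (intro mult_mono) auto
      thus ?thesis using A_le[OF h'] unfolding a'_def c'_def w'_def Ab_def by simp
    qed
    define \<Delta> where "\<Delta> = h'-h"
    define \<delta> where "\<delta> = -D*\<Delta> + \<eta>*\<bar>\<Delta>\<bar>"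
    define x where "x = c' + \<delta>"
    define y where "y = (c'*h')*w' - (x*h)*w'"
    have Qx: "Q w' x h = -\<delta>*w' + a'*(exp y - 1)"
      unfolding w'_def a'_def y_def using Q_repr[OF h', of x \<delta> h] x_def c'_def w'_def by simp
    have Dl': "\<bar>\<Delta>\<bar> < r" using Dl \<Delta>_def by simp
    have yid: "y = w'*(c'*\<Delta> - \<delta>*h)" unfolding y_def x_def \<Delta>_def by (simp add: algebra_simps)
    have dabs: "\<bar>\<delta>\<bar> \<le> (\<bar>D\<bar>+\<eta>)*\<bar>\<Delta>\<bar>"
    proof -
      have "\<bar>\<delta>\<bar> \<le> \<bar>-D*\<Delta>\<bar> + \<bar>\<eta>*\<bar>\<Delta>\<bar>\<bar>" unfolding \<delta>_def by (rule abs_triangle_ineq)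
      also have "\<dots> = (\<bar>D\<bar>+\<eta>)*\<bar>\<Delta>\<bar>" using eta by (simp add: abs_mult algebra_simps)
      finally show ?thesis .
    qed
    have "\<bar>c'*\<Delta> - \<delta>*h\<bar> \<le> \<bar>c'*\<Delta>\<bar> + \<bar>\<delta>*h\<bar>" by (rule abs_triangle_ineq4)
    also have "\<dots> = c'*\<bar>\<Delta>\<bar> + \<bar>\<delta>\<bar>*h" using c' h by (simp add: abs_mult)
    also have "\<dots> \<le> (c+1)*\<bar>\<Delta>\<bar> + ((\<bar>D\<bar>+\<eta>)*\<bar>\<Delta>\<bar>)*h"
    proof -
      have "c'*\<bar>\<Delta>\<bar> \<le> (c+1)*\<bar>\<Delta>\<bar>" using c'b by (simp add: mult_right_mono)
      moreover have "\<bar>\<delta>\<bar>*h \<le> ((\<bar>D\<bar>+\<eta>)*\<bar>\<Delta>\<bar>)*h" using dabs h by (simp add: mult_right_mono)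
      ultimately show ?thesis by simp
    qed
    also have "\<dots> = N*\<bar>\<Delta>\<bar>" unfolding N_def by (simp add: algebra_simps)
    finally have inner: "\<bar>c'*\<Delta> - \<delta>*h\<bar> \<le> N*\<bar>\<Delta>\<bar>" .
    have yb: "\<bar>y\<bar> \<le> w'*(N*\<bar>\<Delta>\<bar>)" unfolding yid using inner w' by (simp add: abs_mult mult_left_mono)
    have y1: "\<bar>y\<bar> \<le> 1"
    proof -
      have "w'*(N*\<bar>\<Delta>\<bar>) \<le> (c+2)*(N*\<bar>\<Delta>\<bar>)" using w'b N by (intro mult_right_mono) auto
      also have "\<dots> = ((c+2)*N)*\<bar>\<Delta>\<bar>" by simp
      also have "\<dots> \<le> ((c+2)*N)*(1/((c+2)*N+1))" using Dl' r_def c N by (intro mult_left_mono) auto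
      also have "\<dots> \<le> 1" using c N by (intro frac_le1) simp
      finally show ?thesis using yb by simp
    qed
    have id1: "\<delta>*w' - a'*y = w'*(\<delta>*(1+a'*h) - a'*c'*\<Delta>)" unfolding yid by (simp add: algebra_simps)
    have id2: "\<delta>*(1+a'*h) - a'*c'*\<Delta> = -\<rho> h'*\<Delta> + \<eta>*\<bar>\<Delta>\<bar>*(1+a'*h)"
      unfolding \<delta>_def \<rho>_def a'_def c'_def by (simp add: algebra_simps)
    have low: "\<delta>*w' - a'*y \<ge> w'*(\<eta>/2*\<bar>\<Delta>\<bar>)"
    proof -
      have "-\<rho> h'*\<Delta> \<ge> -(\<eta>/2)*\<bar>\<Delta>\<bar>"
      proof -
        have "\<rho> h'*\<Delta> \<le> \<bar>\<rho> h'\<bar>*\<bar>\<Delta>\<bar>" by (metis abs_ge_self abs_mult)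
        also have "\<dots> \<le> (\<eta>/2)*\<bar>\<Delta>\<bar>" using rh by (intro mult_right_mono) auto
        finally show ?thesis by simp
      qed
      moreover have "\<eta>*\<bar>\<Delta>\<bar>*(1+a'*h) \<ge> \<eta>*\<bar>\<Delta>\<bar>*1" using a' h eta by (intro mult_left_mono) auto
      ultimately have "\<delta>*(1+a'*h) - a'*c'*\<Delta> \<ge> \<eta>/2*\<bar>\<Delta>\<bar>" using id2 by simp
      thus ?thesis using id1 w' by (simp add: mult_left_mono)
    qed
    have y2: "a'*y^2 \<le> w'*(\<eta>/2*\<bar>\<Delta>\<bar>)"
    proof -
      have "y^2 \<le> (w'*(N*\<bar>\<Delta>\<bar>))^2" using yb by (metis abs_ge_zero power2_abs power_mono)
      hence "a'*y^2 \<le> a'*(w'*(N*\<bar>\<Delta>\<bar>))^2" using a' by (simp add: mult_left_mono)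
      also have "\<dots> = w'*((a'*w'*N^2*\<bar>\<Delta>\<bar>)*\<bar>\<Delta>\<bar>)" by (simp add: power2_eq_square algebra_simps)
      also have "\<dots> \<le> w'*((\<eta>/2)*\<bar>\<Delta>\<bar>)"
      proof -
        have "a'*w'*N^2 \<le> Ab*(c+2)*N^2" using a'b w'b a' w' by (intro mult_mono) auto
        hence "a'*w'*N^2*\<bar>\<Delta>\<bar> \<le> K*\<bar>\<Delta>\<bar>" unfolding K_def by (simp add: mult_right_mono)
        also have "\<dots> \<le> (K+1)*r" using Dl' K by (intro mult_mono) auto
        also have "\<dots> \<le> (K+1)*(\<eta>/(2*(K+1)))" using K r_def by (intro mult_left_mono) auto
        also have "\<dots> = \<eta>/2"
        proof -
          have kk: "K + 1 \<noteq> 0" using K by simp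
          have "(K+1)*(\<eta>/(2*(K+1))) = ((K+1)*\<eta>)/((K+1)*2)" by (simp only: times_divide_eq_right mult.commute[of 2])
          also have "\<dots> = \<eta>/2" using kk by (rule nonzero_mult_divide_mult_cancel_left)
          finally show ?thesis .
        qed
        finally have fin: "a'*w'*N^2*\<bar>\<Delta>\<bar> \<le> \<eta>/2" .
        hence "a'*w'*N^2*\<bar>\<Delta>\<bar>*\<bar>\<Delta>\<bar> \<le> (\<eta>/2)*\<bar>\<Delta>\<bar>" by (rule mult_right_mono) simp
        thus ?thesis using w' by (simp add: mult_left_mono)
      qed
      finally show ?thesis by simp
    qed
    have "a'*y^2 \<le> \<delta>*w' - a'*y" using y2 low by simp
    hence "Q w' x h \<le> 0" unfolding Qx by (intro exp_step a' y1)
    hence "c \<le> x" unfolding c_def by (rule P[OF h w'])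
    thus "cs h + (-cs h*A h/(1+h*A h))*(h'-h) - \<eta>*\<bar>h'-h\<bar> \<le> cs h'"
      unfolding x_def \<delta>_def \<Delta>_def c'_def D_def c_def a_def by simp
  qed
qed

lemma cs_deriv: assumes h: "h \<ge> 0"
  shows "(cs has_real_derivative (-cs h*A h/(1+h*A h))) (at h within {0..})"
  unfolding has_field_derivative_iff
proof (rule tendstoI)
  fix e :: real assume e: "e > 0"
  define D where "D = -cs h*A h/(1+h*A h)"
  have ev0: "eventually (\<lambda>t. t \<noteq> h) (at h within {0..})" by (rule ev_within[of 1]) auto
  show "eventually (\<lambda>t. dist ((cs t - cs h)/(t - h)) (-cs h*A h/(1+h*A h)) < e) (at h within {0..})"
  proof (rule eventually_mono[OF eventually_conj[OF ev0 eventually_conj[OF upper[OF h, of "e/2"] lower[OF h, of "e/2"]]]])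
    fix t assume H: "t \<noteq> h \<and> cs t \<le> cs h + (-cs h*A h/(1+h*A h))*(t-h) + e/2*\<bar>t-h\<bar> \<and> cs h + (-cs h*A h/(1+h*A h))*(t-h) - e/2*\<bar>t-h\<bar> \<le> cs t"
    hence tz: "\<bar>t-h\<bar> > 0" by simp
    have b1: "cs t - cs h - D*(t-h) \<le> e/2*\<bar>t-h\<bar>" using H unfolding D_def by linarith
    have b2: "-(cs t - cs h - D*(t-h)) \<le> e/2*\<bar>t-h\<bar>" using H unfolding D_def by linarith
    have b: "\<bar>cs t - cs h - D*(t-h)\<bar> \<le> e/2*\<bar>t-h\<bar>" using b1 b2 by (rule abs_leI)
    have "(cs t - cs h)/(t - h) - D = (cs t - cs h - D*(t-h))/(t-h)" using H by (simp add: field_simps)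
    hence "\<bar>(cs t - cs h)/(t - h) - D\<bar> = \<bar>cs t - cs h - D*(t-h)\<bar>/\<bar>t-h\<bar>" by (simp add: abs_divide)
    also have "\<dots> \<le> e/2" using b tz by (simp add: divide_le_eq)
    also have "\<dots> < e" using e by simp
    finally have "\<bar>(cs t - cs h)/(t - h) - D\<bar> < e" .
    thus "dist ((cs t - cs h)/(t - h)) (-cs h*A h/(1+h*A h)) < e" by (simp add: dist_real_def D_def)
  qed (use e in auto)
qed

end

lemma J_pos_gen:
  fixes K :: "real \<Rightarrow> real"
  assumes K_meas: "K \<in> borel_measurable lborel"
    and K_nonneg: "\<And>s. K s \<ge> 0"
    and K_mass: "(LINT s|lborel. K s) = 1"
    and K_exp: "\<And>l. integrable lborel (\<lambda>s. K s * exp (l * s))"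
  shows "(LINT s|lborel. K s * exp (- w * s)) > 0"
proof -
  have int: "integrable lborel (\<lambda>s. K s * exp (- w * s))" using K_exp[of "-w"] by simp
  have nn: "AE s in lborel. 0 \<le> K s * exp (- w * s)" using K_nonneg by simp
  have ge: "(LINT s|lborel. K s * exp (- w * s)) \<ge> 0" by (rule integral_nonneg_AE[OF nn])
  have "(LINT s|lborel. K s * exp (- w * s)) \<noteq> 0"
  proof
    assume "(LINT s|lborel. K s * exp (- w * s)) = 0"
    hence "AE s in lborel. K s * exp (- w * s) = 0" using integral_nonneg_eq_0_iff_AE[OF int nn] by simp
    hence "AE s in lborel. K s = 0" by (rule AE_mp) (simp add: AE_I2)
    hence "(LINT s|lborel. K s) = 0" by (rule integral_eq_zero_AE)
    thus False using K_mass by simp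
  qed
  thus ?thesis using ge by simp
qed

lemma E_conv_gen:
  fixes K :: "real \<Rightarrow> real"
  assumes K_nonneg: "\<And>s. K s \<ge> 0"
    and K_exp: "\<And>l. integrable lborel (\<lambda>s. K s * exp (l * s))"
    and l: "0 \<le> l" "l \<le> 1"
  defines "J \<equiv> \<lambda>w. LINT s|lborel. K s * exp (- w * s)"
  shows "exp (-k*(l*a+(1-l)*b)) * J (l*a+(1-l)*b) \<le> l*(exp (-k*a) * J a) + (1-l)*(exp (-k*b) * J b)"
proof -
  define F where "F = (\<lambda>w s. K s * exp (- w * (k + s)))"
  have Fint: "integrable lborel (F w)" for w
  proof -
    have i: "integrable lborel (\<lambda>s. exp (-w*k) * (K s * exp ((-w) * s)))" using K_exp[of "-w"] by simp
    have eq: "(\<lambda>s. exp (-w*k) * (K s * exp ((-w) * s))) = F w"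
      unfolding F_def by (rule ext) (simp add: algebra_simps exp_add[symmetric])
    show ?thesis using i unfolding eq .
  qed
  have FJ: "exp (-k*w) * J w = (LINT s|lborel. F w s)" for w
  proof -
    have "exp (-k*w) * J w = (LINT s|lborel. exp (-k*w) * (K s * exp (- w * s)))" unfolding J_def by simp
    also have "(\<lambda>s. exp (-k*w) * (K s * exp (- w * s))) = F w"
      unfolding F_def by (rule ext) (simp add: algebra_simps exp_add[symmetric])
    finally show ?thesis .
  qed
  have pt: "F (l*a+(1-l)*b) s \<le> l * F a s + (1-l) * F b s" for s
  proof -
    have "exp ((1 - (1-l)) * (-a*(k+s)) + (1-l) * (-b*(k+s))) \<le> (1 - (1-l)) * exp (-a*(k+s)) + (1-l) * exp (-b*(k+s))"
      using convex_onD[OF exp_convex, of "1-l" "-a*(k+s)" "-b*(k+s)"] l by simp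
    hence "exp (-(l*a+(1-l)*b)*(k+s)) \<le> l * exp (-a*(k+s)) + (1-l) * exp (-b*(k+s))"
      by (simp add: algebra_simps)
    hence "K s * exp (-(l*a+(1-l)*b)*(k+s)) \<le> K s * (l * exp (-a*(k+s)) + (1-l) * exp (-b*(k+s)))"
      using K_nonneg by (simp add: mult_left_mono)
    thus ?thesis unfolding F_def by (simp add: algebra_simps)
  qed
  have "(LINT s|lborel. F (l*a+(1-l)*b) s) \<le> (LINT s|lborel. l * F a s + (1-l) * F b s)"
    by (rule integral_mono) (use Fint pt in auto)
  also have "\<dots> = l * (LINT s|lborel. F a s) + (1-l) * (LINT s|lborel. F b s)"
    using Fint by simp
  finally show ?thesis unfolding FJ[symmetric] .
qed

lemma psi_Q:
  assumes "\<epsilon> > 0"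
  shows "psi K p h z \<epsilon> = Qf p (\<lambda>w. LINT s|lborel. K s * exp (- w * s)) (sqrt \<epsilon> * z) (1/sqrt \<epsilon>) h"
proof -
  have s: "sqrt \<epsilon> > 0" using assms by simp
  have i: "(\<lambda>s. K s * exp (- sqrt \<epsilon> * z * s)) = (\<lambda>s. K s * exp (- (sqrt \<epsilon> * z) * s))" by simp
  have e: "exp (-(1/sqrt \<epsilon>*h)*(sqrt \<epsilon>*z)) = exp (- z * h)" using s by (simp add: field_simps)
  have q: "(sqrt \<epsilon> * z)^2 = \<epsilon> * z^2" using assms by (simp add: power_mult_distrib)
  have l: "1/sqrt \<epsilon> * (sqrt \<epsilon> * z) = z" using s by simp
  show ?thesis unfolding psi_def Qf_def i e q l by simp
qed

theorem mainTheorem2: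
  fixes K :: "real \<Rightarrow> real" and p :: real
  assumes K_meas: "K \<in> borel_measurable lborel"
    and K_nonneg: "\<And>s. K s \<ge> 0"
    and K_sym: "\<And>s. K s = K (- s)"
    and K_int: "integrable lborel K"
    and K_mass: "(LINT s|lborel. K s) = 1"
    and K_exp: "\<And>l. integrable lborel (\<lambda>s. K s * exp (l * s))"
    and p_gt: "p > 1"
    and standing_unique: "\<And>h. h \<ge> 0 \<Longrightarrow> \<exists>!q. tangent_pair K p h (fst q) (snd q)"
    and standing_largest: "\<And>h. h \<ge> 0 \<Longrightarrow>
        (\<exists>z>0. psi K p h z (eps0 K p h) = 0) \<and>
        (\<forall>\<epsilon>>0. (\<exists>z>0. psi K p h z \<epsilon> = 0) \<longrightarrow> \<epsilon> \<le> eps0 K p h)"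
    and standing_pos: "\<And>h \<epsilon> z. h \<ge> 0 \<Longrightarrow> \<epsilon> > eps0 K p h \<Longrightarrow> z > 0 \<Longrightarrow>
        psi K p h z \<epsilon> > 0"
  shows "\<forall>h\<ge>0. G K p h (w0 K p h) > 0
     \<and> (eps0 K p has_real_derivative
          (2 * eps0 K p h * G K p h (w0 K p h) / (1 + h * G K p h (w0 K p h))))
          (at h within {0..})
     \<and> 2 * eps0 K p h * G K p h (w0 K p h) / (1 + h * G K p h (w0 K p h)) > 0"
proof -
  define J where "J = (\<lambda>w. LINT s|lborel. K s * exp (- w * s))"
  define cs where "cs = (\<lambda>t. 1 / sqrt (eps0 K p t))"
  define W where "W = (\<lambda>t. w0 K p t)"
  have tp: "tangent_pair K p t (z0 K p t) (eps0 K p t)" if t: "t \<ge> 0" for t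
  proof -
    have "tangent_pair K p t (fst (THE q. tangent_pair K p t (fst q) (snd q))) (snd (THE q. tangent_pair K p t (fst q) (snd q)))"
      by (rule theI'[OF standing_unique[OF t]])
    thus ?thesis unfolding z0_def eps0_def .
  qed
  have e0: "eps0 K p t > 0" and z0p: "z0 K p t > 0" and psi0: "psi K p t (z0 K p t) (eps0 K p t) = 0"
    if "t \<ge> 0" for t using tp[OF that] unfolding tangent_pair_def by auto
  interpret envl p J cs W
  proof
    show "p > 0" using p_gt by simp
    show "J w > 0" for w unfolding J_def by (rule J_pos_gen[OF K_meas K_nonneg K_mass K_exp])
    show "exp (-k*(l*a+(1-l)*b)) * J (l*a+(1-l)*b) \<le> l*(exp (-k*a) * J a) + (1-l)*(exp (-k*b) * J b)"
      if "0 \<le> l" "l \<le> 1" for k a b l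
      unfolding J_def by (rule E_conv_gen[OF K_nonneg K_exp that])
    show "cs t > 0" if "t \<ge> 0" for t unfolding cs_def using e0[OF that] by simp
    show "W t > 0" if "t \<ge> 0" for t unfolding W_def w0_def using e0[OF that] z0p[OF that] by simp
    show "Qf p J (W t) (cs t) t = 0" if "t \<ge> 0" for t
      using psi0[OF that] psi_Q[OF e0[OF that], of K p t "z0 K p t"] unfolding W_def w0_def cs_def J_def by simp
    show "Qf p J w x t > 0" if t: "t \<ge> 0" and w: "w > 0" and x: "0 < x" "x < cs t" for t w x
    proof -
      define \<epsilon> where "\<epsilon> = 1/x^2"
      have ep: "\<epsilon> > 0" unfolding \<epsilon>_def using x by simp
      have sq: "sqrt \<epsilon> = 1/x" unfolding \<epsilon>_def using x by (simp add: real_sqrt_divide)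
      have "x * sqrt (eps0 K p t) < 1" using x(2) e0[OF t] unfolding cs_def by (simp add: field_simps)
      hence "(x * sqrt (eps0 K p t))^2 < 1^2" using x e0[OF t] by (intro power_strict_mono) auto
      hence "x^2 * eps0 K p t < 1" using e0[OF t] by (simp add: power_mult_distrib)
      hence gt: "\<epsilon> > eps0 K p t" unfolding \<epsilon>_def using x by (simp add: field_simps)
      have "psi K p t (x*w) \<epsilon> > 0" by (rule standing_pos[OF t gt]) (use x w in simp)
      moreover have "psi K p t (x*w) \<epsilon> = Qf p J w x t"
        using psi_Q[OF ep, of K p t "x*w"] sq x unfolding J_def by simp
      ultimately show ?thesis by simp
    qed
  qed
  show ?thesis
  proof (intro allI impI)
    fix h :: real assume h: "h \<ge> 0"
    have Ad: "A h = 1 + cs h * W h - (W h)^2" by (rule A_def)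
    have GA: "G K p h (w0 K p h) = A h" unfolding Ad G_def by (simp add: cs_def W_def)
    have Apos: "A h > 0" by (rule A_pos[OF h])
    have c: "cs h > 0" using cs_pos[OF h] .
    have ha: "1 + h * A h > 0" using h Apos by (simp add: add_pos_nonneg)
    have ecs: "eps0 K p t = inverse (cs t ^ 2)" if "t \<ge> 0" for t
      unfolding cs_def using e0[OF that] by (simp add: power_divide)
    have d1: "((\<lambda>t. cs t ^ 2) has_real_derivative (of_nat 2 * ((-cs h*A h/(1+h*A h)) * cs h ^ (2 - Suc 0)))) (at h within {0..})"
      by (rule DERIV_power[OF cs_deriv[OF h]])
    have d2: "((\<lambda>t. inverse (cs t ^ 2)) has_real_derivative
        (- ((of_nat 2 * ((-cs h*A h/(1+h*A h)) * cs h ^ (2 - Suc 0))) * inverse ((cs h ^ 2) ^ Suc (Suc 0))))) (at h within {0..})"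
      by (rule DERIV_inverse_fun[OF d1]) (use c in simp)
    have val: "- ((of_nat 2 * ((-cs h*A h/(1+h*A h)) * cs h ^ (2 - Suc 0))) * inverse ((cs h ^ 2) ^ Suc (Suc 0)))
        = 2 * eps0 K p h * A h / (1 + h * A h)"
      unfolding ecs[OF h] using c ha by (simp add: field_simps power2_eq_square)
    have d3: "(eps0 K p has_real_derivative (2 * eps0 K p h * A h / (1 + h * A h))) (at h within {0..})"
      by (rule has_field_derivative_transform_within[OF d2[unfolded val], of 1]) (use h ecs in auto)
    have pos: "2 * eps0 K p h * A h / (1 + h * A h) > 0" using e0[OF h] Apos ha by simp
    show "G K p h (w0 K p h) > 0
     \<and> (eps0 K p has_real_derivative
          (2 * eps0 K p h * G K p h (w0 K p h) / (1 + h * G K p h (w0 K p h))))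
          (at h within {0..})
     \<and> 2 * eps0 K p h * G K p h (w0 K p h) / (1 + h * G K p h (w0 K p h)) > 0"
      unfolding GA using Apos d3 pos by simp
  qed
qed


end
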